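(* Let $t$ be a join node of a rooted nice tree decomposition of the Tanner graph $G$ with children $t_1,t_2$ ($B_t=B_{t_1}=B_{t_2}$). For $R\subseteq B_t^c$, $Q\subseteq B_t^v$ let $$F_t(R,Q)=\min\{f_{t_1}(R_1,Q)+f_{t_2}(R_2,Q)-|Q|\},\qquad G_t(R,Q)=\sum g_{t_1}(R_1,Q)\,g_{t_2}(R_2,Q),$$ where the minimum is over all pairs $(R_1,R_2)$ of subsets of $B_t^c$ with $R=R_1\oplus R_2\oplus\Gamma_o(G_t[Q\cup B_t^c])$, and the sum is over those pairs attaining the minimum. Then for all $R\subseteq B_t^c$, $Q\subseteq B_t^v$: if $Q\neq\emptyset$, $f_t(R,Q)=F_t(R,Q)$ and $g_t(R,Q)=G_t(R,Q)$; if $Q=\emptyset$, $f_t(R,Q)=\min\{F_t(R,Q),f_{t_1}(R,Q),f_{t_2}(R,Q)\}$ and $$g_t(R,Q)=\mathbb 1_{f_t(R,Q)=F_t(R,Q)}G_t(R,Q)+\mathbb 1_{f_t(R,Q)=f_{t_1}(R,Q)}g_{t_1}(R,Q)+\mathbb 1_{f_t(R,Q)=f_{t_2}(R,Q)}g_{t_2}(R,Q),$$ where $\mathbb 1_{x=y}$ is $1$ if $x=y$ and $0$ otherwise (whenever the minimum value is finite).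
   Context: $G=(\mathcal L\cup\mathcal R,E)$ is a Tanner graph (bipartite, variable nodes $\mathcal L$, check nodes $\mathcal R$). For a subgraph $H$ of $G$ and $S\subseteq\mathcal L$ in $H$, $H[S]$ is the subgraph of $H$ induced by $S$ together with its neighbours in $H$; for $L\subseteq\mathcal L$, $R\subseteq\mathcal R$, $H[L\cup R]$ is the subgraph of $H$ induced on the vertex set $L\cup R$. $\Gamma_o(\cdot)$ is the set of odd-degree check nodes in the indicated subgraph; $\oplus$ is symmetric difference. A trapping set is a nonempty subset of $\mathcal L$. A rooted nice tree decomposition $(T,(B_t))$ is a rooted tree decomposition (every vertex and edge lies in some bag; bags containing a given vertex form a connected subtree) where every node has at most two children, root and leaves have empty bags, a node with two children (join node) has the same bag as each child, and a node $t$ with one child $t'$ has $B_t=B_{t'}\cup\{v\}$ or $B_t=B_{t'}\setminus\{v\}$. For a node $t$: $B_t^c=B_t\cap\mathcal R$, $B_t^v=B_t\cap\mathcal L$; $G_t$ is the subgraph of $G$ induced on the union of the bags of all descendants of $t$ (including $t$); $\mathcal L(G_t)$ is its set of variable nodes. A trapping set $S$ has parameters $(R,Q)$ in $G_t$ ($R\subseteq B_t^c$, $Q\subseteq B_t^v$) if $S\subseteq\mathcal L(G_t)$, $S\cap B_t^v=Q$, and $\Gamma_o(G_t[S])=R$. $f_t(R,Q)$ is the minimum size of a trapping set with parameters $(R,Q)$ in $G_t$ ($+\infty$ if none exists), and $g_t(R,Q)$ is the number of trapping sets with parameters $(R,Q)$ in $G_t$ of size $f_t(R,Q)$ ($0$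 if none exists). *)

theory Defs
  imports Main "HOL-Library.Extended_Nat"
begin

record 'v tgraph =
  vars :: "'v set"
  checks :: "'v set"
  edges :: "('v \<times> 'v) set"

definition tanner_graph :: "'v tgraph \<Rightarrow> bool" where
  "tanner_graph G \<longleftrightarrow> finite (vars G) \<and> finite (checks G) \<and>
     vars G \<inter> checks G = {} \<and> edges G \<subseteq> vars G \<times> checks G"

definition induced_on :: "'v tgraph \<Rightarrow> 'v set \<Rightarrow> 'v tgraph" where
  "induced_on H X = \<lparr>vars = vars H \<inter> X, checks = checks H \<inter> X,
                      edges = edges H \<inter> (X \<times> X)\<rparr>"

definition nbrs :: "'v tgraph \<Rightarrow> 'v set \<Rightarrow> 'v set" where
  "nbrs H S = {c \<in> checks H. \<exists>l\<in>S. (l, c) \<in> edges H}"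

text \<open>H[S] for a set S of variable nodes: induced by S together with its neighbours.\<close>
definition induced_by_vars :: "'v tgraph \<Rightarrow> 'v set \<Rightarrow> 'v tgraph" where
  "induced_by_vars H S = induced_on H (S \<union> nbrs H S)"

definition deg :: "'v tgraph \<Rightarrow> 'v \<Rightarrow> nat" where
  "deg H c = card {l \<in> vars H. (l, c) \<in> edges H}"

definition Gamma_o :: "'v tgraph \<Rightarrow> 'v set" where
  "Gamma_o H = {c \<in> checks H. odd (deg H c)}"

definition symdiff :: "'a set \<Rightarrow> 'a set \<Rightarrow> 'a set" (infixl "\<oplus>" 65) where
  "A \<oplus> B = (A - B) \<union> (B - A)"

definition par_rel :: "'n set \<Rightarrow> 'n \<Rightarrow> ('n \<Rightarrow> 'n) \<Rightarrow> ('n \<times> 'n) set" where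
  "par_rel N r par = {(s, par s) | s. s \<in> N - {r}}"

definition rooted_tree :: "'n set \<Rightarrow> 'n \<Rightarrow> ('n \<Rightarrow> 'n) \<Rightarrow> bool" where
  "rooted_tree N r par \<longleftrightarrow> finite N \<and> r \<in> N \<and> (\<forall>s \<in> N - {r}. par s \<in> N) \<and>
     (\<forall>s \<in> N. (s, r) \<in> (par_rel N r par)\<^sup>*)"

definition children :: "'n set \<Rightarrow> 'n \<Rightarrow> ('n \<Rightarrow> 'n) \<Rightarrow> 'n \<Rightarrow> 'n set" where
  "children N r par t = {s \<in> N - {r}. par s = t}"

definition descendants :: "'n set \<Rightarrow> 'n \<Rightarrow> ('n \<Rightarrow> 'n) \<Rightarrow> 'n \<Rightarrow> 'n set" where
  "descendants N r par t = {s. (s, t) \<in> (par_rel N r par)\<^sup>*}"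

definition tree_connected :: "'n set \<Rightarrow> 'n \<Rightarrow> ('n \<Rightarrow> 'n) \<Rightarrow> 'n set \<Rightarrow> bool" where
  "tree_connected N r par X \<longleftrightarrow>
     (\<forall>a\<in>X. \<forall>b\<in>X. (a, b) \<in> ((par_rel N r par \<union> (par_rel N r par)\<inverse>) \<inter> (X \<times> X))\<^sup>*)"

definition tree_decomposition ::
  "'v tgraph \<Rightarrow> 'n set \<Rightarrow> 'n \<Rightarrow> ('n \<Rightarrow> 'n) \<Rightarrow> ('n \<Rightarrow> 'v set) \<Rightarrow> bool" where
  "tree_decomposition G N r par B \<longleftrightarrow> rooted_tree N r par \<and>
     (\<forall>s\<in>N. B s \<subseteq> vars G \<union> checks G) \<and>
     (\<forall>v \<in> vars G \<union> checks G. \<exists>s\<in>N. v \<in> B s) \<and>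
     (\<forall>(l, c) \<in> edges G. \<exists>s\<in>N. l \<in> B s \<and> c \<in> B s) \<and>
     (\<forall>v \<in> vars G \<union> checks G. tree_connected N r par {s \<in> N. v \<in> B s})"

definition nice_tree_decomposition ::
  "'v tgraph \<Rightarrow> 'n set \<Rightarrow> 'n \<Rightarrow> ('n \<Rightarrow> 'n) \<Rightarrow> ('n \<Rightarrow> 'v set) \<Rightarrow> bool" where
  "nice_tree_decomposition G N r par B \<longleftrightarrow> tree_decomposition G N r par B \<and>
     (\<forall>s\<in>N. card (children N r par s) \<le> 2) \<and>
     B r = {} \<and>
     (\<forall>s\<in>N. children N r par s = {} \<longrightarrow> B s = {}) \<and>
     (\<forall>s\<in>N. card (children N r par s) = 2 \<longrightarrow> (\<forall>c \<in> children N r par s. B c = B s)) \<and>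
     (\<forall>s\<in>N. \<forall>c. children N r par s = {c} \<longrightarrow>
        (\<exists>v. B s = B c \<union> {v} \<or> B s = B c - {v}))"

definition subG :: "'v tgraph \<Rightarrow> 'n set \<Rightarrow> 'n \<Rightarrow> ('n \<Rightarrow> 'n) \<Rightarrow> ('n \<Rightarrow> 'v set) \<Rightarrow> 'n \<Rightarrow> 'v tgraph" where
  "subG G N r par B t = induced_on G (\<Union>s \<in> descendants N r par t. B s)"

definition has_params ::
  "'v tgraph \<Rightarrow> 'n set \<Rightarrow> 'n \<Rightarrow> ('n \<Rightarrow> 'n) \<Rightarrow> ('n \<Rightarrow> 'v set) \<Rightarrow> 'n \<Rightarrow> 'v set \<Rightarrow> 'v set \<Rightarrow> 'v set \<Rightarrow> bool" where
  "has_params G N r par B t R Q S \<longleftrightarrow>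
     S \<noteq> {} \<and> S \<subseteq> vars G \<and>
     S \<subseteq> vars (subG G N r par B t) \<and>
     S \<inter> (B t \<inter> vars G) = Q \<and>
     Gamma_o (induced_by_vars (subG G N r par B t) S) = R"

definition f_t ::
  "'v tgraph \<Rightarrow> 'n set \<Rightarrow> 'n \<Rightarrow> ('n \<Rightarrow> 'n) \<Rightarrow> ('n \<Rightarrow> 'v set) \<Rightarrow> 'n \<Rightarrow> 'v set \<Rightarrow> 'v set \<Rightarrow> enat" where
  "f_t G N r par B t R Q = (INF S \<in> {S. has_params G N r par B t R Q S}. enat (card S))"

definition g_t ::
  "'v tgraph \<Rightarrow> 'n set \<Rightarrow> 'n \<Rightarrow> ('n \<Rightarrow> 'n) \<Rightarrow> ('n \<Rightarrow> 'v set) \<Rightarrow> 'n \<Rightarrow> 'v set \<Rightarrow> 'v set \<Rightarrow> nat" where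
  "g_t G N r par B t R Q =
     card {S. has_params G N r par B t R Q S \<and> enat (card S) = f_t G N r par B t R Q}"

definition join_pairs ::
  "'v tgraph \<Rightarrow> 'n set \<Rightarrow> 'n \<Rightarrow> ('n \<Rightarrow> 'n) \<Rightarrow> ('n \<Rightarrow> 'v set) \<Rightarrow> 'n \<Rightarrow> 'v set \<Rightarrow> 'v set \<Rightarrow> ('v set \<times> 'v set) set" where
  "join_pairs G N r par B t R Q =
     {(R1, R2). R1 \<subseteq> B t \<inter> checks G \<and> R2 \<subseteq> B t \<inter> checks G \<and>
        R = R1 \<oplus> R2 \<oplus> Gamma_o (induced_on (subG G N r par B t) (Q \<union> (B t \<inter> checks G)))}"

definition F_join ::
  "'v tgraph \<Rightarrow> 'n set \<Rightarrow> 'n \<Rightarrow> ('n \<Rightarrow> 'n) \<Rightarrow> ('n \<Rightarrow> 'v set) \<Rightarrow> 'n \<Rightarrow> 'n \<Rightarrow> 'n \<Rightarrow> 'v set \<Rightarrow> 'v set \<Rightarrow> enat" where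
  "F_join G N r par B t t1 t2 R Q =
     (INF p \<in> join_pairs G N r par B t R Q.
        f_t G N r par B t1 (fst p) Q + f_t G N r par B t2 (snd p) Q - enat (card Q))"

definition G_join ::
  "'v tgraph \<Rightarrow> 'n set \<Rightarrow> 'n \<Rightarrow> ('n \<Rightarrow> 'n) \<Rightarrow> ('n \<Rightarrow> 'v set) \<Rightarrow> 'n \<Rightarrow> 'n \<Rightarrow> 'n \<Rightarrow> 'v set \<Rightarrow> 'v set \<Rightarrow> nat" where
  "G_join G N r par B t t1 t2 R Q =
     (\<Sum>p \<in> {p \<in> join_pairs G N r par B t R Q.
               f_t G N r par B t1 (fst p) Q + f_t G N r par B t2 (snd p) Q - enat (card Q)
                 = F_join G N r par B t t1 t2 R Q}.
        g_t G N r par B t1 (fst p) Q * g_t G N r par B t2 (snd p) Q)"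

end

theory Submission
  imports Defs
begin

lemma restr_eq: "(\<And>l. P l \<Longrightarrow> l \<in> W) \<Longrightarrow> {l \<in> S. P l} = {l \<in> S \<inter> W. P l}"
  by blast

lemma card_split:
  assumes "finite S" "S \<subseteq> A \<union> A'" "A \<inter> A' = C"
  shows "card {l \<in> S. P l} + card {l \<in> S \<inter> C. P l} = card {l \<in> S \<inter> A. P l} + card {l \<in> S \<inter> A'. P l}"
proof -
  have "card {l \<in> S \<inter> A. P l} + card {l \<in> S \<inter> A'. P l} =
        card ({l \<in> S \<inter> A. P l} \<union> {l \<in> S \<inter> A'. P l}) + card ({l \<in> S \<inter> A. P l} \<inter> {l \<in> S \<inter> A'. P l})"
    by (rule card_Un_Int) (use assms(1) in auto)
  moreover have "{l \<in> S \<inter> A. P l} \<union> {l \<in> S \<inter> A'. P l} = {l \<in> S. P l}" using assms(2) by blast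
  moreover have "{l \<in> S \<inter> A. P l} \<inter> {l \<in> S \<inter> A'. P l} = {l \<in> S \<inter> C. P l}" using assms(3) by blast
  ultimately show ?thesis by simp
qed

lemma card_split':
  assumes "finite S" "S \<subseteq> A \<union> A'" "A \<inter> A' = C"
  shows "card S + card (S \<inter> C) = card (S \<inter> A) + card (S \<inter> A')"
proof -
  have "card (S \<inter> A) + card (S \<inter> A') = card ((S \<inter> A) \<union> (S \<inter> A')) + card ((S \<inter> A) \<inter> (S \<inter> A'))"
    by (rule card_Un_Int) (use assms(1) in auto)
  moreover have "(S \<inter> A) \<union> (S \<inter> A') = S" using assms(2) by blast
  moreover have "(S \<inter> A) \<inter> (S \<inter> A') = S \<inter> C" using assms(3) by blast
  ultimately show ?thesis by simp
qed

lemma ea1: "a \<le> enat c1 \<Longrightarrow> b \<le> enat c2 \<Longrightarrow> s + q = c1 + c2 \<Longrightarrow> a + b - enat q \<le> enat s"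
  by (cases a; cases b) auto

lemma ea2: "s + q = c1 + c2 \<Longrightarrow> enat c1 + enat c2 - enat q = enat s"
  by simp

lemma ea3: "a \<le> enat c1 \<Longrightarrow> b \<le> enat c2 \<Longrightarrow> enat q \<le> a \<Longrightarrow> enat q \<le> b \<Longrightarrow> s + q = c1 + c2 \<Longrightarrow>
   enat s \<le> a + b - enat q \<Longrightarrow> a = enat c1 \<and> b = enat c2"
  by (cases a; cases b) auto

lemma ea4: "a = \<infinity> \<or> b = \<infinity> \<Longrightarrow> a + b - enat q = \<infinity>"
  by auto

locale jc =
  fixes G :: "'v tgraph" and N :: "'n set" and r :: 'n and par :: "'n \<Rightarrow> 'n"
    and B :: "'n \<Rightarrow> 'v set" and t t1 t2 :: 'n
  assumes tg: "tanner_graph G"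
    and ntd: "nice_tree_decomposition G N r par B"
    and tN: "t \<in> N"
    and ch: "children N r par t = {t1, t2}" and neq: "t1 \<noteq> t2"
begin

abbreviation "E \<equiv> par_rel N r par"
abbreviation "D x \<equiv> descendants N r par x"
definition V where "V x = (\<Union>s \<in> D x. B s)"

lemma rt: "rooted_tree N r par" using ntd unfolding nice_tree_decomposition_def tree_decomposition_def by blast

lemma E_iff: "(a, b) \<in> E \<longleftrightarrow> a \<in> N \<and> a \<noteq> r \<and> b = par a"
  unfolding par_rel_def by auto

lemma t1p: "t1 \<in> N" "t1 \<noteq> r" "par t1 = t" and t2p: "t2 \<in> N" "t2 \<noteq> r" "par t2 = t"
  using ch unfolding children_def by blast+

lemma single: "(a, b) \<in> E \<Longrightarrow> (a, c) \<in> E \<Longrightarrow> b = c"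
  by (simp add: E_iff)

lemma confl: "(x, y) \<in> E\<^sup>* \<Longrightarrow> (x, z) \<in> E\<^sup>* \<Longrightarrow> (y, z) \<in> E\<^sup>* \<or> (z, y) \<in> E\<^sup>*"
proof (induction arbitrary: z rule: converse_rtrancl_induct)
  case base then show ?case by blast
next
  case (step x w)
  from step.prems show ?case
  proof (cases rule: converse_rtranclE)
    case base
    then show ?thesis using step.hyps by (meson converse_rtrancl_into_rtrancl)
  next
    case (step w')
    then have "w' = w" using single \<open>(x, w) \<in> E\<close> by blast
    then show ?thesis using step step.IH by blast
  qed
qed

lemma nocyc: "(x, r) \<in> E\<^sup>* \<Longrightarrow> (x, x) \<notin> E\<^sup>+"
proof (induction rule: converse_rtrancl_induct)
  case base
  then show ?case by (metis E_iff tranclD)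
next
  case (step x y)
  show ?case
  proof
    assume "(x, x) \<in> E\<^sup>+"
    then obtain w where "(x, w) \<in> E" "(w, x) \<in> E\<^sup>*" by (meson tranclD)
    then have "w = y" using single step.hyps(1) by blast
    then have "(y, y) \<in> E\<^sup>+" using \<open>(w, x) \<in> E\<^sup>*\<close> step.hyps(1)
      by (meson rtrancl_into_trancl1)
    then show False using step.IH by blast
  qed
qed

lemma D_N: "s \<in> D x \<Longrightarrow> s = x \<or> s \<in> N"
proof -
  assume "s \<in> D x"
  then have "(s, x) \<in> E\<^sup>*" unfolding descendants_def by simp
  then show ?thesis by (cases rule: converse_rtranclE) (auto simp: E_iff)
qed

lemma D_t: "D t = {t} \<union> D t1 \<union> D t2"
proof
  show "D t \<subseteq> {t} \<union> D t1 \<union> D t2"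
  proof
    fix s assume "s \<in> D t"
    then have "(s, t) \<in> E\<^sup>*" unfolding descendants_def by simp
    then show "s \<in> {t} \<union> D t1 \<union> D t2"
    proof (cases rule: rtranclE)
      case (step y)
      then have "y \<in> children N r par t" unfolding children_def by (auto simp: E_iff)
      then show ?thesis using step ch unfolding descendants_def by auto
    qed simp
  qed
next
  have "(t1, t) \<in> E" "(t2, t) \<in> E" using t1p t2p by (auto simp: E_iff)
  then show "{t} \<union> D t1 \<union> D t2 \<subseteq> D t" unfolding descendants_def
    by (auto intro: rtrancl_into_rtrancl)
qed

lemma D_disj: "D t1 \<inter> D t2 = {}"
proof (rule ccontr)
  assume "D t1 \<inter> D t2 \<noteq> {}"
  then obtain s where "(s, t1) \<in> E\<^sup>*" "(s, t2) \<in> E\<^sup>*" unfolding descendants_def by auto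
  then have c: "(t1, t2) \<in> E\<^sup>* \<or> (t2, t1) \<in> E\<^sup>*" using confl by blast
  have tr: "(t, r) \<in> E\<^sup>*" using rt tN unfolding rooted_tree_def by blast
  have e1: "(t1, t) \<in> E" "(t2, t) \<in> E" using t1p t2p by (auto simp: E_iff)
  { fix a b assume ab: "(a, b) \<in> E\<^sup>*" "a \<noteq> b" "(a, t) \<in> E" "(b, t) \<in> E"
    then obtain w where "(a, w) \<in> E" "(w, b) \<in> E\<^sup>*" by (meson converse_rtranclE)
    then have "w = t" using single ab by blast
    then have "(t, t) \<in> E\<^sup>+" using \<open>(w, b) \<in> E\<^sup>*\<close> ab(4) by (meson rtrancl_into_trancl1)
    then have False using nocyc tr by blast }
  then show False using c e1 neq by metis
qed

lemma cut:
  assumes c: "c \<in> N" "c \<noteq> r" "par c = t"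
    and X: "tree_connected N r par X" and a: "a \<in> X" "a \<in> D c" and b: "b \<in> X" "b \<notin> D c"
  shows "t \<in> X"
proof -
  have "(a, b) \<in> ((E \<union> E\<inverse>) \<inter> (X \<times> X))\<^sup>*" using X a b unfolding tree_connected_def by blast
  then have "b \<in> D c \<or> t \<in> X"
  proof (induction rule: rtrancl_induct)
    case base then show ?case using a by blast
  next
    case (step y z)
    show ?case
    proof (cases "t \<in> X")
      case False
      then have yD: "y \<in> D c" using step.IH by blast
      show ?thesis
      proof (rule ccontr)
        assume zn: "\<not> (z \<in> D c \<or> t \<in> X)"
        from step.hyps(2) have "(y, z) \<in> E \<or> (z, y) \<in> E" by blast
        then show False
        proof
          assume yz: "(y, z) \<in> E"
          show False
          proof (cases "y = c")
            case True
            then have "z = t" using yz c by (simp add: E_iff)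
            then show False using zn step.hyps(2) by blast
          next
            case False
            from yD have "(y, c) \<in> E\<^sup>*" unfolding descendants_def by simp
            then obtain w where "(y, w) \<in> E" "(w, c) \<in> E\<^sup>*" using False by (meson converse_rtranclE)
            then have "w = z" using single yz by blast
            then show False using zn \<open>(w, c) \<in> E\<^sup>*\<close> unfolding descendants_def by simp
          qed
        next
          assume "(z, y) \<in> E"
          then have "(z, c) \<in> E\<^sup>*" using yD unfolding descendants_def
            by (simp add: converse_rtrancl_into_rtrancl)
          then show False using zn unfolding descendants_def by simp
        qed
      qed
    qed simp
  qed
  then show ?thesis using b by blast
qed


lemma td: "tree_decomposition G N r par B" using ntd unfolding nice_tree_decomposition_def by blast

lemma bagsN: "s \<in> N \<Longrightarrow> B s \<subseteq> vars G \<union> checks G"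
  using td unfolding tree_decomposition_def by blast

lemma edge_bag: "(l, c) \<in> edges G \<Longrightarrow> \<exists>s\<in>N. l \<in> B s \<and> c \<in> B s"
  using td unfolding tree_decomposition_def by blast

lemma conn: "v \<in> vars G \<union> checks G \<Longrightarrow> tree_connected N r par {s\<in>N. v \<in> B s}"
  using td unfolding tree_decomposition_def by blast

lemma Bch: "B t1 = B t" "B t2 = B t"
proof -
  have "card (children N r par t) = 2" using ch neq by simp
  then have "\<forall>c\<in>children N r par t. B c = B t" using ntd tN unfolding nice_tree_decomposition_def by blast
  then show "B t1 = B t" "B t2 = B t" using ch by auto
qed

lemma self_D: "x \<in> D x" unfolding descendants_def by simp

lemma isch: "(i = t1 \<or> i = t2) \<Longrightarrow> i \<in> N \<and> i \<noteq> r \<and> par i = t \<and> B i = B t"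
  using t1p t2p Bch by blast

lemma DiN: "(i = t1 \<or> i = t2) \<Longrightarrow> s \<in> D i \<Longrightarrow> s \<in> N"
  using D_N isch by blast

lemma Bsub: "(i = t1 \<or> i = t2) \<Longrightarrow> B t \<subseteq> V i"
  using isch self_D unfolding V_def by blast

lemma Bt_sub: "B t \<subseteq> V t" using self_D unfolding V_def by blast

lemma subG_eq: "subG G N r par B x = induced_on G (V x)" by (simp add: subG_def V_def)

lemma Vt: "V t = V t1 \<union> V t2 \<union> B t"
  unfolding V_def by (subst D_t) (simp add: Un_ac)

lemma Vt': "V t = V t1 \<union> V t2"
proof -
  have "B t \<subseteq> V t1" using Bsub[of t1] by simp
  then show ?thesis using Vt by (metis Un_absorb2 Un_assoc Un_commute sup.absorb1)
qed

lemma loc: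
  assumes i: "i = t1 \<or> i = t2" and x: "x \<in> V i" "x \<notin> B t" and s: "s \<in> N" "x \<in> B s"
  shows "s \<in> D i"
proof (rule ccontr)
  assume ns: "s \<notin> D i"
  from x obtain s1 where s1: "s1 \<in> D i" "x \<in> B s1" unfolding V_def by blast
  have s1N: "s1 \<in> N" using DiN[OF i s1(1)] .
  have "x \<in> vars G \<union> checks G" using bagsN s1N s1 by blast
  then have tc: "tree_connected N r par {s\<in>N. x \<in> B s}" by (rule conn)
  have ic: "i \<in> N" "i \<noteq> r" "par i = t" using isch[OF i] by auto
  have "t \<in> {s\<in>N. x \<in> B s}"
    by (rule cut[OF ic tc, of s1 s]) (use s1 s1N s ns in auto)
  then show False using x by blast
qed

lemma V12: "V t1 \<inter> V t2 = B t"
proof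
  show "B t \<subseteq> V t1 \<inter> V t2" using Bsub by blast
next
  show "V t1 \<inter> V t2 \<subseteq> B t"
  proof
    fix x assume "x \<in> V t1 \<inter> V t2"
    then obtain s2 where s2: "s2 \<in> D t2" "x \<in> B s2" unfolding V_def by blast
    show "x \<in> B t"
    proof (rule ccontr)
      assume "x \<notin> B t"
      then have "s2 \<in> D t1" using loc[of t1 x s2] \<open>x \<in> V t1 \<inter> V t2\<close> s2 DiN[of t2 s2] by blast
      then show False using D_disj s2 by blast
    qed
  qed
qed

lemma edge_loc:
  assumes i: "i = t1 \<or> i = t2" and e: "(l, c) \<in> edges G"
  shows "l \<in> V i \<Longrightarrow> l \<notin> B t \<Longrightarrow> c \<in> V i"
    and "c \<in> V i \<Longrightarrow> c \<notin> B t \<Longrightarrow> l \<in> V i"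
proof -
  obtain s where s: "s \<in> N" "l \<in> B s" "c \<in> B s" using edge_bag e by blast
  show "l \<in> V i \<Longrightarrow> l \<notin> B t \<Longrightarrow> c \<in> V i" using loc[OF i _ _ s(1)] s unfolding V_def by blast
  show "c \<in> V i \<Longrightarrow> c \<notin> B t \<Longrightarrow> l \<in> V i" using loc[OF i _ _ s(1)] s unfolding V_def by blast
qed


abbreviation "cnt X c \<equiv> card {l \<in> X. (l, c) \<in> edges G}"
abbreviation "odds x S \<equiv> {c \<in> checks G \<inter> V x. odd (cnt S c)}"
abbreviation "hp x \<equiv> has_params G N r par B x"
abbreviation "GQ Q \<equiv> {c \<in> B t \<inter> checks G. odd (cnt Q c)}"

lemma disjVC: "vars G \<inter> checks G = {}" and finV: "finite (vars G)"
  using tg unfolding tanner_graph_def by auto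

lemma P0:
  assumes S: "S \<subseteq> vars G \<inter> V x"
  shows "Gamma_o (induced_by_vars (subG G N r par B x) S) = odds x S"
proof -
  let ?H = "subG G N r par B x"
  let ?X = "S \<union> nbrs ?H S"
  have nb: "nbrs ?H S = {c \<in> checks G \<inter> V x. \<exists>l\<in>S. (l, c) \<in> edges G}"
    using S unfolding nbrs_def subG_eq induced_on_def by (simp; blast)
  have eq: "{l \<in> vars G \<inter> V x \<inter> ?X. (l, c) \<in> edges G \<inter> (V x \<times> V x) \<inter> (?X \<times> ?X)}
      = {l \<in> S. (l, c) \<in> edges G}" if c: "c \<in> checks G \<inter> V x \<inter> ?X" for c
    using S c disjVC unfolding nb by auto
  have "Gamma_o (induced_by_vars ?H S) =
     {c \<in> checks G \<inter> V x \<inter> ?X. odd (card {l \<in> vars G \<inter> V x \<inter> ?X. (l, c) \<in> edges G \<inter> (V x \<times> V x) \<inter> (?X \<times> ?X)})}"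
    unfolding Gamma_o_def deg_def induced_by_vars_def by (simp add: subG_eq induced_on_def Int_ac)
  also have "\<dots> = {c \<in> checks G \<inter> V x \<inter> ?X. odd (cnt S c)}"
  proof (rule Collect_cong)
    fix c
    show "(c \<in> checks G \<inter> V x \<inter> ?X \<and> odd (card {l \<in> vars G \<inter> V x \<inter> ?X. (l, c) \<in> edges G \<inter> (V x \<times> V x) \<inter> (?X \<times> ?X)})) =
          (c \<in> checks G \<inter> V x \<inter> ?X \<and> odd (cnt S c))"
    proof (cases "c \<in> checks G \<inter> V x \<inter> ?X")
      case True
      show ?thesis by (simp only: eq[OF True] simp_thms True)
    next
      case False
      then show ?thesis by (simp only: simp_thms)
    qed
  qed
  also have "\<dots> = odds x S"
  proof -
    have "c \<in> ?X" if "c \<in> checks G \<inter> V x" "odd (cnt S c)" for c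
    proof -
      have "{l \<in> S. (l, c) \<in> edges G} \<noteq> {}" using that(2) by (metis card.empty odd_card_imp_not_empty)
      then show ?thesis using that(1) unfolding nb by auto
    qed
    then show ?thesis by auto
  qed
  finally show ?thesis .
qed

lemma P1:
  assumes Q: "Q \<subseteq> B t \<inter> vars G"
  shows "Gamma_o (induced_on (subG G N r par B t) (Q \<union> (B t \<inter> checks G))) = GQ Q"
proof -
  have Bt: "B t \<subseteq> V t" by (rule Bt_sub)
  have eq: "{l \<in> vars G \<inter> V t \<inter> (Q \<union> (B t \<inter> checks G)). (l, c) \<in> edges G \<inter> (V t \<times> V t) \<inter> ((Q \<union> (B t \<inter> checks G)) \<times> (Q \<union> (B t \<inter> checks G)))}
      = {l \<in> Q. (l, c) \<in> edges G}" if c: "c \<in> B t \<inter> checks G" for c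
    using Q c disjVC Bt by auto
  have "Gamma_o (induced_on (subG G N r par B t) (Q \<union> (B t \<inter> checks G))) =
     {c \<in> checks G \<inter> V t \<inter> (Q \<union> (B t \<inter> checks G)). odd (card {l \<in> vars G \<inter> V t \<inter> (Q \<union> (B t \<inter> checks G)). (l, c) \<in> edges G \<inter> (V t \<times> V t) \<inter> ((Q \<union> (B t \<inter> checks G)) \<times> (Q \<union> (B t \<inter> checks G)))})}"
    unfolding Gamma_o_def deg_def by (simp add: subG_eq induced_on_def Int_ac)
  also have "checks G \<inter> V t \<inter> (Q \<union> (B t \<inter> checks G)) = B t \<inter> checks G"
    using Q Bt disjVC by auto
  finally have 1: "Gamma_o (induced_on (subG G N r par B t) (Q \<union> (B t \<inter> checks G))) =
     {c \<in> B t \<inter> checks G. odd (card {l \<in> vars G \<inter> V t \<inter> (Q \<union> (B t \<inter> checks G)). (l, c) \<in> edges G \<inter> (V t \<times> V t) \<inter> ((Q \<union> (B t \<inter> checks G)) \<times> (Q \<union> (B t \<inter> checks G)))})}" .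
  show ?thesis unfolding 1
  proof (rule Collect_cong)
    fix c
    show "(c \<in> B t \<inter> checks G \<and> odd (card {l \<in> vars G \<inter> V t \<inter> (Q \<union> (B t \<inter> checks G)). (l, c) \<in> edges G \<inter> (V t \<times> V t) \<inter> ((Q \<union> (B t \<inter> checks G)) \<times> (Q \<union> (B t \<inter> checks G)))})) =
          (c \<in> B t \<inter> checks G \<and> odd (cnt Q c))"
    proof (cases "c \<in> B t \<inter> checks G")
      case True
      show ?thesis by (simp only: eq[OF True] simp_thms True)
    next
      case False
      then show ?thesis by (simp only: simp_thms)
    qed
  qed
qed

lemma hp_iff:
  assumes x: "x = t \<or> x = t1 \<or> x = t2"
  shows "hp x R Q S \<longleftrightarrow> S \<noteq> {} \<and> S \<subseteq> vars G \<inter> V x \<and> S \<inter> (B t \<inter> vars G) = Q \<and> odds x S = R"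
proof -
  have Bx: "B x = B t" using x Bch by auto
  show ?thesis
  proof
    assume h: "hp x R Q S"
    then have S: "S \<subseteq> vars G \<inter> V x" unfolding has_params_def by (simp add: subG_eq induced_on_def)
    show "S \<noteq> {} \<and> S \<subseteq> vars G \<inter> V x \<and> S \<inter> (B t \<inter> vars G) = Q \<and> odds x S = R"
      using h P0[OF S] S Bx unfolding has_params_def by simp
  next
    assume h: "S \<noteq> {} \<and> S \<subseteq> vars G \<inter> V x \<and> S \<inter> (B t \<inter> vars G) = Q \<and> odds x S = R"
    then have S: "S \<subseteq> vars G \<inter> V x" by blast
    show "hp x R Q S" using h P0[OF S] S Bx unfolding has_params_def by (simp add: subG_eq induced_on_def)
  qed
qed

lemma hp_facts:
  assumes x: "x = t \<or> x = t1 \<or> x = t2" and h: "hp x R Q S"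
  shows "S \<noteq> {}" "S \<subseteq> vars G \<inter> V x" "S \<inter> (B t \<inter> vars G) = Q" "odds x S = R"
  using hp_iff[OF x, of R Q S] h by simp_all

lemma hp1: "hp t1 R Q S \<Longrightarrow> odds t1 S = R \<and> S \<noteq> {}"
  using hp_facts(1,4)[of t1 R Q S] by simp

lemma hp2: "hp t2 R Q S \<Longrightarrow> odds t2 S = R \<and> S \<noteq> {}"
  using hp_facts(1,4)[of t2 R Q S] by simp

lemma cnt_loc:
  assumes i: "i = t1 \<or> i = t2" and c: "c \<in> V i" "c \<notin> B t"
  shows "cnt S c = cnt (S \<inter> V i) c"
proof -
  have "{l \<in> S. (l, c) \<in> edges G} = {l \<in> S \<inter> V i. (l, c) \<in> edges G}"
    by (rule restr_eq) (rule edge_loc(2)[OF i _ c])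
  then show ?thesis by simp
qed

lemma cnt_B:
  assumes S: "S \<subseteq> vars G \<inter> V t"
  shows "cnt S c + cnt (S \<inter> B t) c = cnt (S \<inter> V t1) c + cnt (S \<inter> V t2) c"
proof (rule card_split)
  show "finite S" using S finV finite_subset by blast
  show "S \<subseteq> V t1 \<union> V t2" using S Vt' by (simp add: le_infE)
  show "V t1 \<inter> V t2 = B t" by (rule V12)
qed

lemma odds_nB:
  assumes i: "i = t1 \<or> i = t2" and c: "c \<in> V i" "c \<notin> B t"
  shows "(c \<in> odds t S) \<longleftrightarrow> (c \<in> odds i (S \<inter> V i))"
proof -
  have "c \<in> V t" using c Vt' i by blast
  then show ?thesis using cnt_loc[OF i c, of S] c by simp
qed

lemma odds_B:
  assumes S: "S \<subseteq> vars G \<inter> V t" and c: "c \<in> B t"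
  shows "(c \<in> odds t S) \<longleftrightarrow> (((c \<in> odds t1 (S \<inter> V t1)) \<noteq> (c \<in> odds t2 (S \<inter> V t2))) \<noteq> (c \<in> GQ (S \<inter> B t)))"
proof -
  have "c \<in> V t" "c \<in> V t1" "c \<in> V t2" using c Bsub Bt_sub by blast+
  moreover have "even (cnt S c + cnt (S \<inter> B t) c) = even (cnt (S \<inter> V t1) c + cnt (S \<inter> V t2) c)"
    using cnt_B[OF S, of c] by simp
  ultimately show ?thesis using c by auto
qed


lemma mem_symdiff: "x \<in> A \<oplus> C \<longleftrightarrow> (x \<in> A) \<noteq> (x \<in> C)"
  unfolding symdiff_def by blast

lemma odds_sub:
  assumes h: "hp t R Q S" and R: "R \<subseteq> B t \<inter> checks G" and i: "i = t1 \<or> i = t2"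
  shows "odds i (S \<inter> V i) \<subseteq> B t"
proof
  fix c assume c: "c \<in> odds i (S \<inter> V i)"
  show "c \<in> B t"
  proof (rule ccontr)
    assume nb: "c \<notin> B t"
    have "c \<in> V i" using c by blast
    then have "c \<in> odds t S" using odds_nB[OF i _ nb] c by blast
    then have "c \<in> R" using h hp_iff[of t] by blast
    then show False using R nb by blast
  qed
qed

lemma decomp:
  assumes h: "hp t R Q S" and R: "R \<subseteq> B t \<inter> checks G"
  shows "i = t1 \<or> i = t2 \<Longrightarrow> S \<inter> V i \<noteq> {} \<Longrightarrow> hp i (odds i (S \<inter> V i)) Q (S \<inter> V i)"
    and "R = odds t1 (S \<inter> V t1) \<oplus> odds t2 (S \<inter> V t2) \<oplus> GQ Q"
    and "card S + card Q = card (S \<inter> V t1) + card (S \<inter> V t2)"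
    and "S \<inter> B t = Q"
proof -
  have hh: "S \<noteq> {}" "S \<subseteq> vars G \<inter> V t" "S \<inter> (B t \<inter> vars G) = Q" "odds t S = R"
    using h hp_iff[of t] by auto
  show SB: "S \<inter> B t = Q" using hh by blast
  show "hp i (odds i (S \<inter> V i)) Q (S \<inter> V i)" if i: "i = t1 \<or> i = t2" and ne: "S \<inter> V i \<noteq> {}"
  proof -
    have "B t \<subseteq> V i" using Bsub[OF i] .
    then have "(S \<inter> V i) \<inter> (B t \<inter> vars G) = Q" using hh by blast
    moreover have "S \<inter> V i \<subseteq> vars G \<inter> V i" using hh by blast
    ultimately show ?thesis using hp_iff[of i] i ne by blast
  qed
  show "R = odds t1 (S \<inter> V t1) \<oplus> odds t2 (S \<inter> V t2) \<oplus> GQ Q"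
  proof (rule set_eqI)
    fix c
    show "c \<in> R \<longleftrightarrow> c \<in> odds t1 (S \<inter> V t1) \<oplus> odds t2 (S \<inter> V t2) \<oplus> GQ Q"
    proof (cases "c \<in> B t")
      case True
      have k: "c \<in> odds t S \<longleftrightarrow> (((c \<in> odds t1 (S \<inter> V t1)) \<noteq> (c \<in> odds t2 (S \<inter> V t2))) \<noteq> (c \<in> GQ Q))"
        using odds_B[OF hh(2) True] unfolding SB .
      show ?thesis unfolding mem_symdiff hh(4)[symmetric] using k by blast
    next
      case False
      have "c \<notin> odds t1 (S \<inter> V t1)" "c \<notin> odds t2 (S \<inter> V t2)"
        using odds_sub[OF h R, of t1] odds_sub[OF h R, of t2] False by blast+
      moreover have "c \<notin> R" using R False by blast
      moreover have "c \<notin> GQ Q" using False by blast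
      ultimately show ?thesis unfolding mem_symdiff by blast
    qed
  qed
  have "card S + card (S \<inter> B t) = card (S \<inter> V t1) + card (S \<inter> V t2)"
  proof (rule card_split')
    show "finite S" using hh(2) finV finite_subset by blast
    show "S \<subseteq> V t1 \<union> V t2" using hh(2) Vt' by (simp add: le_infE)
    show "V t1 \<inter> V t2 = B t" by (rule V12)
  qed
  then show "card S + card Q = card (S \<inter> V t1) + card (S \<inter> V t2)" using SB by simp
qed

lemma compose:
  assumes h1: "hp t1 R1 Q S1" and h2: "hp t2 R2 Q S2"
    and R1: "R1 \<subseteq> B t \<inter> checks G" and R2: "R2 \<subseteq> B t \<inter> checks G"
  shows "(S1 \<union> S2) \<inter> V t1 = S1" "(S1 \<union> S2) \<inter> V t2 = S2" "(S1 \<union> S2) \<inter> B t = Q"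
    and "hp t (R1 \<oplus> R2 \<oplus> GQ Q) Q (S1 \<union> S2)"
    and "card (S1 \<union> S2) + card Q = card S1 + card S2"
proof -
  have a: "S1 \<noteq> {}" "S1 \<subseteq> vars G \<inter> V t1" "S1 \<inter> (B t \<inter> vars G) = Q" "odds t1 S1 = R1"
    using h1 hp_iff[of t1] by auto
  have b: "S2 \<noteq> {}" "S2 \<subseteq> vars G \<inter> V t2" "S2 \<inter> (B t \<inter> vars G) = Q" "odds t2 S2 = R2"
    using h2 hp_iff[of t2] by auto
  have B1: "B t \<subseteq> V t1" and B2: "B t \<subseteq> V t2" using Bsub by auto
  have "S2 \<inter> V t1 \<subseteq> B t" using b(2) V12 by blast
  then have "S2 \<inter> V t1 = Q" using b(2,3) B1 by blast
  moreover have "Q \<subseteq> S1" using a(3) by blast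
  ultimately show e1: "(S1 \<union> S2) \<inter> V t1 = S1" using a(2) by blast
  have "S1 \<inter> V t2 \<subseteq> B t" using a(2) V12 by blast
  then have "S1 \<inter> V t2 = Q" using a(2,3) B2 by blast
  moreover have "Q \<subseteq> S2" using b(3) by blast
  ultimately show e2: "(S1 \<union> S2) \<inter> V t2 = S2" using b(2) by blast
  show e3: "(S1 \<union> S2) \<inter> B t = Q" using a(2,3) b(2,3) by blast
  have S: "S1 \<union> S2 \<subseteq> vars G \<inter> V t" using a(2) b(2) Vt' by blast
  have fin: "finite (S1 \<union> S2)" using S finV finite_subset by blast
  have od: "odds t (S1 \<union> S2) = R1 \<oplus> R2 \<oplus> GQ Q"
  proof (rule set_eqI)
    fix c
    show "c \<in> odds t (S1 \<union> S2) \<longleftrightarrow> c \<in> R1 \<oplus> R2 \<oplus> GQ Q"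
    proof (cases "c \<in> B t")
      case True
      have k: "c \<in> odds t (S1 \<union> S2) \<longleftrightarrow> (((c \<in> odds t1 S1) \<noteq> (c \<in> odds t2 S2)) \<noteq> (c \<in> GQ Q))"
        using odds_B[OF S True] unfolding e1 e2 e3 .
      show ?thesis unfolding mem_symdiff a(4)[symmetric] b(4)[symmetric] using k by blast
    next
      case False
      have "c \<notin> odds t (S1 \<union> S2)"
      proof
        assume c: "c \<in> odds t (S1 \<union> S2)"
        then have "c \<in> V t1 \<or> c \<in> V t2" using Vt' by blast
        then show False
        proof
          assume "c \<in> V t1"
          then have "c \<in> odds t1 S1" using odds_nB[of t1 c "S1 \<union> S2", unfolded e1] False c by blast
          then show False using a(4) R1 False by blast
        next
          assume "c \<in> V t2"
          then have "c \<in> odds t2 S2" using odds_nB[of t2 c "S1 \<union> S2", unfolded e2] False c by blast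
          then show False using b(4) R2 False by blast
        qed
      qed
      moreover have "c \<notin> R1" "c \<notin> R2" "c \<notin> GQ Q" using R1 R2 False by blast+
      ultimately show ?thesis unfolding mem_symdiff by blast
    qed
  qed
  show "hp t (R1 \<oplus> R2 \<oplus> GQ Q) Q (S1 \<union> S2)"
    using hp_iff[of t] S od a(1,3) b(3) by blast
  have "card (S1 \<union> S2) + card (S1 \<inter> S2) = card S1 + card S2"
    using card_Un_Int[of S1 S2] fin by simp
  moreover have "S1 \<inter> S2 = Q" using a(2,3) b(2,3) V12 by blast
  ultimately show "card (S1 \<union> S2) + card Q = card S1 + card S2" by simp
qed


abbreviation "f x R Q \<equiv> f_t G N r par B x R Q"
abbreviation "g x R Q \<equiv> g_t G N r par B x R Q"
abbreviation "h R Q p \<equiv> f t1 (fst p) Q + f t2 (snd p) Q - enat (card Q)"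
abbreviation "AB R Q \<equiv> {S. hp t R Q S \<and> S \<inter> V t1 \<noteq> {} \<and> S \<inter> V t2 \<noteq> {}}"

lemma f_le: "hp x R Q S \<Longrightarrow> f x R Q \<le> enat (card S)"
  unfolding f_t_def by (rule INF_lower) simp

lemma f_ex:
  assumes "f x R Q \<noteq> \<infinity>"
  shows "\<exists>S. hp x R Q S \<and> f x R Q = enat (card S)"
proof -
  have ne: "\<exists>S. hp x R Q S"
  proof (rule ccontr)
    assume "\<not> (\<exists>S. hp x R Q S)"
    then have em: "{S. hp x R Q S} = {}" by auto
    have "f x R Q = \<infinity>" unfolding f_t_def em by (simp add: top_enat_def)
    then show False using assms by simp
  qed
  then obtain S0 where S0: "hp x R Q S0" "\<forall>S. hp x R Q S \<longrightarrow> card S0 \<le> card S"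
    using ex_has_least_nat[of "hp x R Q" _ card] by blast
  have "f x R Q = enat (card S0)" unfolding f_t_def
    by (rule antisym, rule INF_lower, use S0 in simp, rule INF_greatest, use S0 in simp)
  then show ?thesis using S0 by blast
qed

lemma f_q:
  assumes x: "x = t \<or> x = t1 \<or> x = t2"
  shows "enat (card Q) \<le> f x R Q"
  unfolding f_t_def
proof (rule INF_greatest)
  fix S assume "S \<in> {S. hp x R Q S}"
  then have "S \<subseteq> vars G" "S \<inter> (B t \<inter> vars G) = Q" using hp_iff[OF x] by auto
  moreover have "finite S" using calculation(1) finV finite_subset by blast
  ultimately show "enat (card Q) \<le> enat (card S)" by (auto intro: card_mono)
qed

lemma JP_iff:
  assumes "Q \<subseteq> B t \<inter> vars G"
  shows "join_pairs G N r par B t R Q = {(R1, R2). R1 \<subseteq> B t \<inter> checks G \<and> R2 \<subseteq> B t \<inter> checks G \<and> R = R1 \<oplus> R2 \<oplus> GQ Q}"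
  unfolding join_pairs_def P1[OF assms] ..

lemma decomp_pair:
  assumes h: "S \<in> AB R Q" and R: "R \<subseteq> B t \<inter> checks G" and Q: "Q \<subseteq> B t \<inter> vars G"
  shows "(odds t1 (S \<inter> V t1), odds t2 (S \<inter> V t2)) \<in> join_pairs G N r par B t R Q"
    and "hp t1 (odds t1 (S \<inter> V t1)) Q (S \<inter> V t1)" "hp t2 (odds t2 (S \<inter> V t2)) Q (S \<inter> V t2)"
    and "card S + card Q = card (S \<inter> V t1) + card (S \<inter> V t2)"
    and "S = (S \<inter> V t1) \<union> (S \<inter> V t2)"
proof -
  have hS: "hp t R Q S" using h by blast
  have a: "odds t1 (S \<inter> V t1) \<subseteq> B t \<inter> checks G" using odds_sub[OF hS R, of t1] by blast
  have b: "odds t2 (S \<inter> V t2) \<subseteq> B t \<inter> checks G" using odds_sub[OF hS R, of t2] by blast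
  show "(odds t1 (S \<inter> V t1), odds t2 (S \<inter> V t2)) \<in> join_pairs G N r par B t R Q"
    unfolding JP_iff[OF Q] by (simp only: mem_Collect_eq prod.case) (intro conjI a b decomp(2)[OF hS R])
  have ne: "S \<inter> V t1 \<noteq> {}" "S \<inter> V t2 \<noteq> {}" using h by simp_all
  show "hp t1 (odds t1 (S \<inter> V t1)) Q (S \<inter> V t1)" by (rule decomp(1)[OF hS R]) (simp, rule ne)
  show "hp t2 (odds t2 (S \<inter> V t2)) Q (S \<inter> V t2)" by (rule decomp(1)[OF hS R]) (simp, rule ne)
  show "card S + card Q = card (S \<inter> V t1) + card (S \<inter> V t2)" by (rule decomp(3)[OF hS R])
  have "S \<subseteq> vars G \<inter> V t" using hp_iff[of t R Q S] hS by simp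
  then have "S \<subseteq> V t" by (rule le_infE)
  then show "S = (S \<inter> V t1) \<union> (S \<inter> V t2)" using Vt' by blast
qed

lemma J1:
  assumes R: "R \<subseteq> B t \<inter> checks G" and Q: "Q \<subseteq> B t \<inter> vars G"
  shows "(INF S \<in> AB R Q. enat (card S)) = F_join G N r par B t t1 t2 R Q"
  unfolding F_join_def
proof (rule antisym)
  show "(INF p \<in> join_pairs G N r par B t R Q. h R Q p) \<le> (INF S \<in> AB R Q. enat (card S))"
  proof (rule INF_greatest)
    fix S assume S: "S \<in> AB R Q"
    note d = decomp_pair[OF S R Q]
    have "(INF p \<in> join_pairs G N r par B t R Q. h R Q p) \<le> h R Q (odds t1 (S \<inter> V t1), odds t2 (S \<inter> V t2))"
      by (rule INF_lower) (rule d(1))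
    also have "\<dots> \<le> enat (card S)"
      by (simp only: fst_conv snd_conv, rule ea1[OF f_le[OF d(2)] f_le[OF d(3)] d(4)])
    finally show "(INF p \<in> join_pairs G N r par B t R Q. h R Q p) \<le> enat (card S)" .
  qed
next
  show "(INF S \<in> AB R Q. enat (card S)) \<le> (INF p \<in> join_pairs G N r par B t R Q. h R Q p)"
  proof (rule INF_greatest)
    fix p assume p: "p \<in> join_pairs G N r par B t R Q"
    obtain R1 R2 where pe: "p = (R1, R2)" by (cases p)
    have pp: "R1 \<subseteq> B t \<inter> checks G" "R2 \<subseteq> B t \<inter> checks G" "R = R1 \<oplus> R2 \<oplus> GQ Q"
      using p unfolding pe JP_iff[OF Q] by auto
    show "(INF S \<in> AB R Q. enat (card S)) \<le> h R Q p"
    proof (cases "f t1 R1 Q = \<infinity> \<or> f t2 R2 Q = \<infinity>")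
      case True
      then show ?thesis unfolding pe by (simp only: fst_conv snd_conv ea4[OF True]) simp
    next
      case False
      then obtain S1 S2 where S1: "hp t1 R1 Q S1" "f t1 R1 Q = enat (card S1)"
        and S2: "hp t2 R2 Q S2" "f t2 R2 Q = enat (card S2)" using f_ex by blast
      note c = compose[OF S1(1) S2(1) pp(1,2)]
      have ne: "S1 \<noteq> {}" "S2 \<noteq> {}" using S1(1) S2(1) hp_iff by blast+
      have "S1 \<union> S2 \<in> AB R Q" using c ne pp(3) by simp
      then have "(INF S \<in> AB R Q. enat (card S)) \<le> enat (card (S1 \<union> S2))" by (rule INF_lower)
      also have "\<dots> = h R Q p" unfolding pe using S1(2) S2(2) ea2[OF c(5)] by simp
      finally show ?thesis .
    qed
  qed
qed


lemma finJP: "finite (join_pairs G N r par B t R Q)"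
proof -
  have "finite (checks G)" using tg unfolding tanner_graph_def by blast
  then have fB: "finite (B t \<inter> checks G)" by blast
  have "join_pairs G N r par B t R Q \<subseteq> Pow (B t \<inter> checks G) \<times> Pow (B t \<inter> checks G)"
    unfolding join_pairs_def by auto
  then show ?thesis using fB finite_subset by blast
qed

lemma finHP: "finite {S. hp x R Q S \<and> P S}"
proof -
  have "{S. hp x R Q S \<and> P S} \<subseteq> Pow (vars G)" unfolding has_params_def by auto
  then show ?thesis using finV finite_subset by blast
qed

lemma J2:
  assumes R: "R \<subseteq> B t \<inter> checks G" and Q: "Q \<subseteq> B t \<inter> vars G"
  shows "card {S \<in> AB R Q. enat (card S) = F_join G N r par B t t1 t2 R Q} = G_join G N r par B t t1 t2 R Q"
proof -
  define F where "F = F_join G N r par B t t1 t2 R Q"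
  define M1 where "M1 R1 = {S. hp t1 R1 Q S \<and> enat (card S) = f t1 R1 Q}" for R1
  define M2 where "M2 R2 = {S. hp t2 R2 Q S \<and> enat (card S) = f t2 R2 Q}" for R2
  define JPm where "JPm = {p \<in> join_pairs G N r par B t R Q. h R Q p = F}"
  define U where "U = (\<Union>p\<in>JPm. M1 (fst p) \<times> M2 (snd p))"
  have Gj: "G_join G N r par B t t1 t2 R Q = (\<Sum>p\<in>JPm. card (M1 (fst p) \<times> M2 (snd p)))"
    unfolding G_join_def JPm_def F_def M1_def M2_def g_t_def card_cartesian_product ..
  have finJPm: "finite JPm" unfolding JPm_def using finJP by simp
  have finM: "finite (M1 (fst p) \<times> M2 (snd p))" for p
    unfolding M1_def M2_def by (intro finite_cartesian_product finHP)
  have JPmJP: "p \<in> JPm \<Longrightarrow> p \<in> join_pairs G N r par B t R Q" for p unfolding JPm_def by simp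
  have JPsub: "fst p \<subseteq> B t \<inter> checks G \<and> snd p \<subseteq> B t \<inter> checks G \<and> R = fst p \<oplus> snd p \<oplus> GQ Q"
    if "p \<in> JPm" for p using JPmJP[OF that] unfolding JP_iff[OF Q] by auto
  have cU: "card U = (\<Sum>p\<in>JPm. card (M1 (fst p) \<times> M2 (snd p)))"
    unfolding U_def
  proof (rule card_UN_disjoint[OF finJPm])
    show "\<forall>i\<in>JPm. finite (M1 (fst i) \<times> M2 (snd i))" using finM by blast
    show "\<forall>i\<in>JPm. \<forall>j\<in>JPm. i \<noteq> j \<longrightarrow> M1 (fst i) \<times> M2 (snd i) \<inter> M1 (fst j) \<times> M2 (snd j) = {}"
    proof (intro ballI impI)
      fix i j assume "i \<in> JPm" "j \<in> JPm" "i \<noteq> j"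
      show "M1 (fst i) \<times> M2 (snd i) \<inter> M1 (fst j) \<times> M2 (snd j) = {}"
      proof (rule ccontr)
        assume "M1 (fst i) \<times> M2 (snd i) \<inter> M1 (fst j) \<times> M2 (snd j) \<noteq> {}"
        then obtain S1 S2 where "S1 \<in> M1 (fst i)" "S1 \<in> M1 (fst j)" "S2 \<in> M2 (snd i)" "S2 \<in> M2 (snd j)"
          by blast
        then have "hp t1 (fst i) Q S1" "hp t1 (fst j) Q S1" "hp t2 (snd i) Q S2" "hp t2 (snd j) Q S2"
          unfolding M1_def M2_def by simp_all
        then have "odds t1 S1 = fst i" "odds t1 S1 = fst j" "odds t2 S2 = snd i" "odds t2 S2 = snd j"
          using hp1 hp2 by blast+
        then have "i = j" by (simp add: prod_eq_iff)
        then show False using \<open>i \<noteq> j\<close> by simp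
      qed
    qed
  qed
  have comp: "hp t R Q (S1 \<union> S2) \<and> (S1 \<union> S2) \<inter> V t1 = S1 \<and> (S1 \<union> S2) \<inter> V t2 = S2 \<and>
      S1 \<noteq> {} \<and> S2 \<noteq> {} \<and> card (S1 \<union> S2) + card Q = card S1 + card S2"
    if "p \<in> JPm" "S1 \<in> M1 (fst p)" "S2 \<in> M2 (snd p)" for p S1 S2
  proof -
    have h1: "hp t1 (fst p) Q S1" and h2: "hp t2 (snd p) Q S2" using that unfolding M1_def M2_def by simp_all
    note js = JPsub[OF that(1)]
    note c = compose[OF h1 h2 conjunct1[OF js] conjunct1[OF conjunct2[OF js]]]
    have "S1 \<noteq> {}" "S2 \<noteq> {}" using hp_facts(1)[OF _ h1] hp_facts(1)[OF _ h2] by simp_all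
    then show ?thesis using c js by simp
  qed
  have inj: "inj_on (\<lambda>p. fst p \<union> snd p) U"
  proof (rule inj_onI)
    fix x y assume x: "x \<in> U" and y: "y \<in> U" and e: "fst x \<union> snd x = fst y \<union> snd y"
    from x obtain p where p: "p \<in> JPm" "fst x \<in> M1 (fst p)" "snd x \<in> M2 (snd p)" unfolding U_def by auto
    from y obtain p' where p': "p' \<in> JPm" "fst y \<in> M1 (fst p')" "snd y \<in> M2 (snd p')" unfolding U_def by auto
    have a: "(fst x \<union> snd x) \<inter> V t1 = fst x" "(fst x \<union> snd x) \<inter> V t2 = snd x" using comp[OF p] by simp_all
    have b: "(fst y \<union> snd y) \<inter> V t1 = fst y" "(fst y \<union> snd y) \<inter> V t2 = snd y" using comp[OF p'] by simp_all
    have "fst x = fst y" using a(1) b(1) unfolding e by simp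
    moreover have "snd x = snd y" using a(2) b(2) unfolding e by simp
    ultimately show "x = y" by (simp add: prod_eq_iff)
  qed
  have seteq: "{S \<in> AB R Q. enat (card S) = F} = (\<lambda>p. fst p \<union> snd p) ` U"
  proof
    show "{S \<in> AB R Q. enat (card S) = F} \<subseteq> (\<lambda>p. fst p \<union> snd p) ` U"
    proof
      fix S assume S: "S \<in> {S \<in> AB R Q. enat (card S) = F}"
      then have SA: "S \<in> AB R Q" and SF: "enat (card S) = F" by simp_all
      note d = decomp_pair[OF SA R Q]
      define p where "p = (odds t1 (S \<inter> V t1), odds t2 (S \<inter> V t2))"
      have pJ: "p \<in> join_pairs G N r par B t R Q" unfolding p_def by (rule d(1))
      have "F \<le> h R Q p" unfolding F_def F_join_def by (rule INF_lower[OF pJ])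
      then have le: "enat (card S) \<le> h R Q p" using SF by simp
      have a1: "f t1 (fst p) Q \<le> enat (card (S \<inter> V t1))" unfolding p_def using f_le[OF d(2)] by simp
      have a2: "f t2 (snd p) Q \<le> enat (card (S \<inter> V t2))" unfolding p_def using f_le[OF d(3)] by simp
      have q1: "enat (card Q) \<le> f t1 (fst p) Q" and q2: "enat (card Q) \<le> f t2 (snd p) Q" using f_q by blast+
      have eqs: "f t1 (fst p) Q = enat (card (S \<inter> V t1)) \<and> f t2 (snd p) Q = enat (card (S \<inter> V t2))"
        by (rule ea3[OF a1 a2 q1 q2 d(4) le])
      have hpF: "h R Q p = F"
      proof -
        have "h R Q p = enat (card S)" using eqs ea2[OF d(4)] by simp
        then show ?thesis using SF by simp
      qed
      have pm: "p \<in> JPm" unfolding JPm_def using pJ hpF by simp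
      have "S \<inter> V t1 \<in> M1 (fst p)" unfolding M1_def using d(2) eqs unfolding p_def by simp
      moreover have "S \<inter> V t2 \<in> M2 (snd p)" unfolding M2_def using d(3) eqs unfolding p_def by simp
      ultimately have "(S \<inter> V t1, S \<inter> V t2) \<in> M1 (fst p) \<times> M2 (snd p)" by simp
      then have "(S \<inter> V t1, S \<inter> V t2) \<in> U" unfolding U_def using pm by (rule UN_I[rotated])
      moreover have "S = fst (S \<inter> V t1, S \<inter> V t2) \<union> snd (S \<inter> V t1, S \<inter> V t2)" using d(5) by simp
      ultimately show "S \<in> (\<lambda>p. fst p \<union> snd p) ` U" by (rule rev_image_eqI)
    qed
  next
    show "(\<lambda>p. fst p \<union> snd p) ` U \<subseteq> {S \<in> AB R Q. enat (card S) = F}"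
    proof
      fix S assume "S \<in> (\<lambda>p. fst p \<union> snd p) ` U"
      then obtain x p where p: "p \<in> JPm" "fst x \<in> M1 (fst p)" "snd x \<in> M2 (snd p)" and Sx: "S = fst x \<union> snd x"
        unfolding U_def by auto
      note c = comp[OF p]
      have "f t1 (fst p) Q = enat (card (fst x))" "f t2 (snd p) Q = enat (card (snd x))"
        using p(2,3) unfolding M1_def M2_def by simp_all
      then have "h R Q p = enat (card S)" using ea2[of "card S" "card Q"] c unfolding Sx by simp
      moreover have "h R Q p = F" using p(1) unfolding JPm_def by simp
      ultimately show "S \<in> {S \<in> AB R Q. enat (card S) = F}" using c unfolding Sx by simp
    qed
  qed
  have "card {S \<in> AB R Q. enat (card S) = F} = card U" unfolding seteq by (rule card_image[OF inj])
  then show ?thesis using cU Gj unfolding F_def by simp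
qed


lemma odds_only:
  assumes ij: "(i = t1 \<and> j = t2) \<or> (i = t2 \<and> j = t1)"
    and S: "S \<subseteq> vars G \<inter> V i" and SB: "S \<inter> B t = {}"
  shows "odds t S = odds i S" and "S \<inter> V j = {}"
proof -
  have i: "i = t1 \<or> i = t2" and j: "j = t1 \<or> j = t2" using ij by auto
  have Vij: "V i \<inter> V j = B t" using ij V12 by (auto simp: Int_commute)
  show Sj: "S \<inter> V j = {}" using S SB Vij by blast
  have Si: "S \<inter> V i = S" using S by blast
  have St: "S \<subseteq> vars G \<inter> V t" using S Vt' i by blast
  have e0: "odds j {} = {}" "GQ {} = {}" by simp_all
  show "odds t S = odds i S"
  proof (rule set_eqI)
    fix c
    show "c \<in> odds t S \<longleftrightarrow> c \<in> odds i S"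
    proof (cases "c \<in> B t")
      case True
      have k: "(c \<in> odds t S) \<longleftrightarrow> (((c \<in> odds t1 (S \<inter> V t1)) \<noteq> (c \<in> odds t2 (S \<inter> V t2))) \<noteq> (c \<in> GQ (S \<inter> B t)))"
        by (rule odds_B[OF St True])
      show ?thesis using ij
      proof
        assume a: "i = t1 \<and> j = t2"
        have "S \<inter> V t1 = S" "S \<inter> V t2 = {}" using a Si Sj by simp_all
        note k' = k[unfolded this SB e0]
        show ?thesis using a k' by simp
      next
        assume a: "i = t2 \<and> j = t1"
        have "S \<inter> V t2 = S" "S \<inter> V t1 = {}" using a Si Sj by simp_all
        note k' = k[unfolded this SB e0]
        show ?thesis using a k' by simp
      qed
    next
      case False
      show ?thesis
      proof (cases "c \<in> V i")
        case True
        show ?thesis using odds_nB[OF i True False, of S] Si by simp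
      next
        case ni: False
        have "c \<notin> odds t S"
        proof
          assume c: "c \<in> odds t S"
          then have "c \<in> V j" using ni Vt' ij by blast
          then have "c \<in> odds j (S \<inter> V j)" using odds_nB[OF j _ False, of S] c by blast
          then show False using Sj by simp
        qed
        moreover have "c \<notin> odds i S" using ni by blast
        ultimately show ?thesis by blast
      qed
    qed
  qed
qed

lemma only:
  assumes ij: "(i = t1 \<and> j = t2) \<or> (i = t2 \<and> j = t1)"
  shows "hp i R {} S \<longleftrightarrow> hp t R {} S \<and> S \<inter> V j = {}"
proof -
  have i: "i = t1 \<or> i = t2" and j: "j = t1 \<or> j = t2" using ij by auto
  have Vij: "V i \<inter> V j = B t" using ij V12 by (auto simp: Int_commute)
  have Vtij: "V t = V i \<union> V j" using ij Vt' by auto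
  show ?thesis
  proof
    assume h: "hp i R {} S"
    note hf = hp_facts[of i R "{}" S, OF _ h]
    have S: "S \<subseteq> vars G \<inter> V i" using hf(2) i by simp
    have SB: "S \<inter> B t = {}" using hf(3) S i by auto
    note oo = odds_only[OF ij S SB]
    have "S \<subseteq> vars G \<inter> V t" using S Vtij by blast
    then have "hp t R {} S" using hp_iff[of t R "{}" S] hf oo i by auto
    then show "hp t R {} S \<and> S \<inter> V j = {}" using oo by simp
  next
    assume h: "hp t R {} S \<and> S \<inter> V j = {}"
    note hf = hp_facts[of t R "{}" S, OF _ conjunct1[OF h]]
    have S: "S \<subseteq> vars G \<inter> V i" using hf(2) h Vtij by auto
    have SB: "S \<inter> B t = {}" using hf(3) S by auto
    note oo = odds_only[OF ij S SB]
    show "hp i R {} S" using hp_iff[of i R "{}" S] hf oo i S by auto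
  qed
qed


lemma caseQ:
  assumes R: "R \<subseteq> B t \<inter> checks G" and Q: "Q \<subseteq> B t \<inter> vars G" and Qne: "Q \<noteq> {}"
  shows "f t R Q = F_join G N r par B t t1 t2 R Q \<and> g t R Q = G_join G N r par B t t1 t2 R Q"
proof -
  have mem: "hp t R Q S \<longleftrightarrow> (hp t R Q S \<and> S \<inter> V t1 \<noteq> {} \<and> S \<inter> V t2 \<noteq> {})" for S
  proof (intro iffI conjI)
    assume h: "hp t R Q S"
    have SQ: "S \<inter> (B t \<inter> vars G) = Q" using hp_facts(3)[OF _ h] by simp
    have "B t \<subseteq> V t1" "B t \<subseteq> V t2" using Bsub by auto
    then have "Q \<subseteq> S \<inter> V t1" "Q \<subseteq> S \<inter> V t2" using SQ by auto
    then show "S \<inter> V t1 \<noteq> {}" "S \<inter> V t2 \<noteq> {}" using Qne by auto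
    show "hp t R Q S" by (rule h)
  qed simp
  have eq: "{S. hp t R Q S} = AB R Q" using mem by simp
  have f: "f t R Q = F_join G N r par B t t1 t2 R Q"
    unfolding f_t_def eq by (rule J1[OF R Q])
  have "{S. hp t R Q S \<and> enat (card S) = f t R Q} = {S \<in> AB R Q. enat (card S) = F_join G N r par B t t1 t2 R Q}"
    unfolding f[symmetric] using mem by simp
  then have "g t R Q = G_join G N r par B t t1 t2 R Q"
    unfolding g_t_def using J2[OF R Q] by simp
  then show ?thesis using f by simp
qed

lemma caseE:
  assumes R: "R \<subseteq> B t \<inter> checks G"
  shows "f t R {} = min (F_join G N r par B t t1 t2 R {}) (min (f t1 R {}) (f t2 R {}))"
    and "g t R {} =
            (if f t R {} = F_join G N r par B t t1 t2 R {}
               then G_join G N r par B t t1 t2 R {} else 0) +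
            (if f t R {} = f t1 R {} then g t1 R {} else 0) +
            (if f t R {} = f t2 R {} then g t2 R {} else 0)"
proof -
  have Q: "{} \<subseteq> B t \<inter> vars G" by simp
  define F where "F = F_join G N r par B t t1 t2 R {}"
  have o1: "hp t1 R {} S \<longleftrightarrow> hp t R {} S \<and> S \<inter> V t2 = {}" for S using only[of t1 t2] by simp
  have o2: "hp t2 R {} S \<longleftrightarrow> hp t R {} S \<and> S \<inter> V t1 = {}" for S using only[of t2 t1] by simp
  have memE: "hp t R {} S \<longleftrightarrow> S \<in> AB R {} \<or> hp t1 R {} S \<or> hp t2 R {} S" for S
  proof
    assume h: "hp t R {} S"
    show "S \<in> AB R {} \<or> hp t1 R {} S \<or> hp t2 R {} S"
    proof (cases "S \<inter> V t1 = {}")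
      case True then show ?thesis using o2[of S] h by simp
    next
      case F1: False
      show ?thesis
      proof (cases "S \<inter> V t2 = {}")
        case True then show ?thesis using o1[of S] h by simp
      next
        case False then show ?thesis using F1 h by simp
      qed
    qed
  next
    assume "S \<in> AB R {} \<or> hp t1 R {} S \<or> hp t2 R {} S"
    then show "hp t R {} S" using o1[of S] o2[of S] by auto
  qed
  have eq: "{S. hp t R {} S} = AB R {} \<union> {S. hp t1 R {} S} \<union> {S. hp t2 R {} S}"
  proof (rule set_eqI)
    fix S show "S \<in> {S. hp t R {} S} \<longleftrightarrow> S \<in> AB R {} \<union> {S. hp t1 R {} S} \<union> {S. hp t2 R {} S}"
      using memE[of S] by blast
  qed
  have fe: "f t R {} = min F (min (f t1 R {}) (f t2 R {}))"
    unfolding f_t_def eq INF_union J1[OF R Q] F_def by (simp add: inf_min min.assoc)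
  then show "f t R {} = min (F_join G N r par B t t1 t2 R {}) (min (f t1 R {}) (f t2 R {}))"
    unfolding F_def .
  define fv where "fv = f t R {}"
  define X0 where "X0 = {S \<in> AB R {}. enat (card S) = fv}"
  define X1 where "X1 = {S. hp t1 R {} S \<and> enat (card S) = fv}"
  define X2 where "X2 = {S. hp t2 R {} S \<and> enat (card S) = fv}"
  have seq: "{S. hp t R {} S \<and> enat (card S) = fv} = X0 \<union> X1 \<union> X2"
    unfolding X0_def X1_def X2_def
  proof (rule set_eqI)
    fix S show "S \<in> {S. hp t R {} S \<and> enat (card S) = fv} \<longleftrightarrow>
      S \<in> {S \<in> AB R {}. enat (card S) = fv} \<union> {S. hp t1 R {} S \<and> enat (card S) = fv} \<union> {S. hp t2 R {} S \<and> enat (card S) = fv}"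
      using memE[of S] by blast
  qed
  have fin0: "finite X0" unfolding X0_def using finHP[of t R "{}" "\<lambda>S. (S \<inter> V t1 \<noteq> {} \<and> S \<inter> V t2 \<noteq> {}) \<and> enat (card S) = fv"]
    by (simp add: conj_assoc)
  have fin1: "finite X1" unfolding X1_def by (rule finHP)
  have fin2: "finite X2" unfolding X2_def by (rule finHP)
  have d01: "X0 \<inter> X1 = {}"
  proof -
    { fix S assume "S \<in> X0" "S \<in> X1"
      then have "S \<inter> V t2 \<noteq> {}" "hp t1 R {} S" unfolding X0_def X1_def by simp_all
      then have False using o1[of S] by simp }
    then show ?thesis by blast
  qed
  have d02: "X0 \<inter> X2 = {}"
  proof -
    { fix S assume "S \<in> X0" "S \<in> X2"
      then have "S \<inter> V t1 \<noteq> {}" "hp t2 R {} S" unfolding X0_def X2_def by simp_all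
      then have False using o2[of S] by simp }
    then show ?thesis by blast
  qed
  have d12: "X1 \<inter> X2 = {}"
  proof -
    { fix S assume "S \<in> X1" "S \<in> X2"
      then have "hp t1 R {} S" "hp t2 R {} S" unfolding X1_def X2_def by simp_all
      then have "S \<inter> V t2 = {}" "S \<subseteq> vars G \<inter> V t2" "S \<noteq> {}" using o1[of S] hp_facts(1,2)[of t2 R "{}" S] by simp_all
      then have False by blast }
    then show ?thesis by blast
  qed
  have cardU: "card (X0 \<union> X1 \<union> X2) = card X0 + card X1 + card X2"
  proof -
    have "card (X0 \<union> X1) = card X0 + card X1" using card_Un_disjoint[OF fin0 fin1 d01] .
    moreover have "(X0 \<union> X1) \<inter> X2 = {}" using d02 d12 by blast
    ultimately show ?thesis using card_Un_disjoint[of "X0 \<union> X1" X2] fin0 fin1 fin2 by simp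
  qed
  have c0: "card X0 = (if fv = F then G_join G N r par B t t1 t2 R {} else 0)"
  proof (cases "fv = F")
    case True
    then show ?thesis unfolding X0_def using J2[OF R Q] unfolding F_def by simp
  next
    case False
    have "fv \<le> F" unfolding fv_def fe by (rule min.cobounded1)
    then have lt: "fv < F" using False by simp
    have "X0 = {}"
    proof -
      { fix S assume "S \<in> X0"
        then have S: "S \<in> AB R {}" "enat (card S) = fv" unfolding X0_def by simp_all
        have "F \<le> enat (card S)" unfolding F_def J1[OF R Q, symmetric] by (rule INF_lower[OF S(1)])
        then have False using S(2) lt by simp }
      then show ?thesis by blast
    qed
    then show ?thesis using False by simp
  qed
  have c1: "card X1 = (if fv = f t1 R {} then g t1 R {} else 0)"
  proof (cases "fv = f t1 R {}")
    case True
    then show ?thesis unfolding X1_def g_t_def by simp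
  next
    case False
    have "fv \<le> f t1 R {}" unfolding fv_def fe by (metis min.cobounded1 min.cobounded2 order_trans)
    then have lt: "fv < f t1 R {}" using False by simp
    have "X1 = {}"
    proof -
      { fix S assume "S \<in> X1"
        then have S: "hp t1 R {} S" "enat (card S) = fv" unfolding X1_def by simp_all
        have "f t1 R {} \<le> enat (card S)" by (rule f_le[OF S(1)])
        then have False using S(2) lt by simp }
      then show ?thesis by blast
    qed
    then show ?thesis using False by simp
  qed
  have c2: "card X2 = (if fv = f t2 R {} then g t2 R {} else 0)"
  proof (cases "fv = f t2 R {}")
    case True
    then show ?thesis unfolding X2_def g_t_def by simp
  next
    case False
    have "fv \<le> f t2 R {}" unfolding fv_def fe by (metis min.cobounded1 min.cobounded2 order_trans)
    then have lt: "fv < f t2 R {}" using False by simp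
    have "X2 = {}"
    proof -
      { fix S assume "S \<in> X2"
        then have S: "hp t2 R {} S" "enat (card S) = fv" unfolding X2_def by simp_all
        have "f t2 R {} \<le> enat (card S)" by (rule f_le[OF S(1)])
        then have False using S(2) lt by simp }
      then show ?thesis by blast
    qed
    then show ?thesis using False by simp
  qed
  have "g t R {} = card (X0 \<union> X1 \<union> X2)" unfolding g_t_def seq[unfolded fv_def, symmetric] fv_def ..
  then show "g t R {} =
            (if f t R {} = F_join G N r par B t t1 t2 R {}
               then G_join G N r par B t t1 t2 R {} else 0) +
            (if f t R {} = f t1 R {} then g t1 R {} else 0) +
            (if f t R {} = f t2 R {} then g t2 R {} else 0)"
    using cardU c0 c1 c2 unfolding fv_def F_def by simp
qed

end

theorem mainTheorem11:
  fixes G :: "'v tgraph" and N :: "'n set" and r :: 'n and par :: "'n \<Rightarrow> 'n"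
    and B :: "'n \<Rightarrow> 'v set" and t t1 t2 :: 'n
  assumes "tanner_graph G"
    and "nice_tree_decomposition G N r par B"
    and "t \<in> N"
    and "children N r par t = {t1, t2}" and "t1 \<noteq> t2"
  shows "\<forall>R Q. R \<subseteq> B t \<inter> checks G \<longrightarrow> Q \<subseteq> B t \<inter> vars G \<longrightarrow>
     (Q \<noteq> {} \<longrightarrow>
        f_t G N r par B t R Q = F_join G N r par B t t1 t2 R Q \<and>
        g_t G N r par B t R Q = G_join G N r par B t t1 t2 R Q) \<and>
     (Q = {} \<longrightarrow>
        f_t G N r par B t R Q =
          min (F_join G N r par B t t1 t2 R Q)
              (min (f_t G N r par B t1 R Q) (f_t G N r par B t2 R Q)) \<and>
        (f_t G N r par B t R Q \<noteq> \<infinity> \<longrightarrow>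
          g_t G N r par B t R Q =
            (if f_t G N r par B t R Q = F_join G N r par B t t1 t2 R Q
               then G_join G N r par B t t1 t2 R Q else 0) +
            (if f_t G N r par B t R Q = f_t G N r par B t1 R Q
               then g_t G N r par B t1 R Q else 0) +
            (if f_t G N r par B t R Q = f_t G N r par B t2 R Q
               then g_t G N r par B t2 R Q else 0)))"
proof -
  interpret jc G N r par B t t1 t2 using assms by unfold_locales
  show ?thesis
  proof (intro allI impI conjI)
    fix R Q assume R: "R \<subseteq> B t \<inter> checks G" and Q: "Q \<subseteq> B t \<inter> vars G"
    { assume "Q \<noteq> {}"
      then have c: "f t R Q = F_join G N r par B t t1 t2 R Q \<and> g t R Q = G_join G N r par B t t1 t2 R Q"
        by (rule caseQ[OF R Q])
      show "f t R Q = F_join G N r par B t t1 t2 R Q" using c by simp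
      show "g t R Q = G_join G N r par B t t1 t2 R Q" using c by simp }
    { assume e: "Q = {}"
      show "f t R Q = min (F_join G N r par B t t1 t2 R Q) (min (f t1 R Q) (f t2 R Q))"
        unfolding e by (rule caseE(1)[OF R])
      show "g t R Q =
            (if f t R Q = F_join G N r par B t t1 t2 R Q
               then G_join G N r par B t t1 t2 R Q else 0) +
            (if f t R Q = f t1 R Q then g t1 R Q else 0) +
            (if f t R Q = f t2 R Q then g t2 R Q else 0)"
        unfolding e by (rule caseE(2)[OF R]) }
  qed
qed

end
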